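(* Let $\mathcal{M}$ be either $\mathcal{M}^{inj}$ or $\mathcal{M}^{gen}$. A clustering functor $\mathfrak{C}$ on $\mathcal{M}$ is excisive if and only if it is representable.
   Context: $\mathcal{M}^{gen}$ is the category whose objects are finite metric spaces and whose morphisms $f:(X,d_X)\to(Y,d_Y)$ are distance non-increasing maps ($d_Y(f(x),f(x'))\leq d_X(x,x')$ for all $x,x'$); $\mathcal{M}^{inj}$ has the same objects and as morphisms the injective distance non-increasing maps. For a set map $f:X\to Y$ and a partition $P_Y$ of $Y$, $f^*(P_Y)$ is the partition of $X$ whose blocks are the nonempty sets $f^{-1}(B)$, $B$ a block of $P_Y$. A clustering functor on $\mathcal{M}$ is a rule $\mathfrak{C}$ assigning to every finite metric space $(X,d_X)$ a partition $\mathfrak{C}(X,d_X)$ of $X$ such that for every morphism $f:(X,d_X)\to(Y,d_Y)$ in $\mathcal{M}$, $\mathfrak{C}(X,d_X)$ refines $f^*(\mathfrak{C}(Y,d_Y))$. $\mathfrak{C}$ is excisive if for every finite metric space $(X,d_X)$ and every block $B$ of $\mathfrak{C}(X,d_X)$, $\mathfrak{C}(B,d_X|_{B\times B})$ is the partition of $B$ with the single block $B$. For a collection $\Omega$ of finite metric spaces, $\mathfrak{C}^\Omega$ is the clustering functor on $\mathcal{M}$ defined as follows: for a finite metric space $X$, points $x,x'\in X$ lie in the same block of $\mathfrak{C}^\Omega(X)$ iff there exist $z_0,\ldots,z_k\in X$ with $z_0=x$, $z_k=x'$, spaces $\omega_1,\ldots,\omega_k\in\Omega$, points $\alpha_i,\beta_i\in\omega_i$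 and morphisms $f_i\in\mathrm{Mor}_{\mathcal{M}}(\omega_i,X)$ with $f_i(\alpha_i)=z_{i-1}$ and $f_i(\beta_i)=z_i$ for $i=1,\ldots,k$. $\mathfrak{C}$ is representable if $\mathfrak{C}=\mathfrak{C}^\Omega$ (i.e. they give the same partition of every finite metric space) for some collection $\Omega$ of finite metric spaces. *)

theory Defs
  imports Complex_Main "HOL-Library.Disjoint_Sets"
begin

text \<open>A finite metric space is represented by a finite carrier set of natural numbers
  together with a distance function that is a metric on the carrier.  Every finite
  metric space is isometric to such a space.\<close>

type_synonym space = "nat set \<times> (nat \<Rightarrow> nat \<Rightarrow> real)"

definition fin_metric :: "nat set \<Rightarrow> (nat \<Rightarrow> nat \<Rightarrow> real) \<Rightarrow> bool" where
  "fin_metric X d \<longleftrightarrow> finite X \<and>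
     (\<forall>x\<in>X. \<forall>y\<in>X. d x y \<ge> 0 \<and> (d x y = 0 \<longleftrightarrow> x = y) \<and> d x y = d y x) \<and>
     (\<forall>x\<in>X. \<forall>y\<in>X. \<forall>z\<in>X. d x z \<le> d x y + d y z)"

datatype category = Gen | Inj

definition mor :: "category \<Rightarrow> nat set \<Rightarrow> (nat \<Rightarrow> nat \<Rightarrow> real) \<Rightarrow> nat set \<Rightarrow> (nat \<Rightarrow> nat \<Rightarrow> real)
                    \<Rightarrow> (nat \<Rightarrow> nat) \<Rightarrow> bool" where
  "mor M X dX Y dY f \<longleftrightarrow> f ` X \<subseteq> Y \<and>
     (\<forall>x\<in>X. \<forall>x'\<in>X. dY (f x) (f x') \<le> dX x x') \<and>
     (M = Inj \<longrightarrow> inj_on f X)"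

definition refines :: "nat set set \<Rightarrow> nat set set \<Rightarrow> bool" where
  "refines P Q \<longleftrightarrow> (\<forall>A\<in>P. \<exists>B\<in>Q. A \<subseteq> B)"

definition pullback :: "nat set \<Rightarrow> (nat \<Rightarrow> nat) \<Rightarrow> nat set set \<Rightarrow> nat set set" where
  "pullback X f PY = {X \<inter> f -` B | B. B \<in> PY} - {{}}"

definition clustering_functor ::
  "category \<Rightarrow> (nat set \<Rightarrow> (nat \<Rightarrow> nat \<Rightarrow> real) \<Rightarrow> nat set set) \<Rightarrow> bool" where
  "clustering_functor M C \<longleftrightarrow>
     (\<forall>X d. fin_metric X d \<longrightarrow> partition_on X (C X d)) \<and>
     (\<forall>X dX Y dY f. fin_metric X dX \<longrightarrow> fin_metric Y dY \<longrightarrow> mor M X dX Y dY f \<longrightarrow>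
        refines (C X dX) (pullback X f (C Y dY)))"

text \<open>Excisive: every block, with the restricted metric, is clustered into a single block.
  (The restriction of d to B \<times> B is represented by d itself with carrier B.)\<close>
definition excisive :: "(nat set \<Rightarrow> (nat \<Rightarrow> nat \<Rightarrow> real) \<Rightarrow> nat set set) \<Rightarrow> bool" where
  "excisive C \<longleftrightarrow> (\<forall>X d. fin_metric X d \<longrightarrow> (\<forall>B\<in>C X d. C B d = {B}))"

definition omega_step :: "category \<Rightarrow> space set \<Rightarrow> nat set \<Rightarrow> (nat \<Rightarrow> nat \<Rightarrow> real)
                          \<Rightarrow> nat \<Rightarrow> nat \<Rightarrow> bool" where
  "omega_step M \<Omega> X d x x' \<longleftrightarrow>
     (\<exists>W dW \<alpha> \<beta> f. (W, dW) \<in> \<Omega> \<and> \<alpha> \<in> W \<and> \<beta> \<in> W \<and> mor M W dW X d f \<and>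
        f \<alpha> = x \<and> f \<beta> = x')"

definition omega_rel :: "category \<Rightarrow> space set \<Rightarrow> nat set \<Rightarrow> (nat \<Rightarrow> nat \<Rightarrow> real)
                         \<Rightarrow> (nat \<times> nat) set" where
  "omega_rel M \<Omega> X d = {(x, x'). x \<in> X \<and> x' \<in> X \<and> (omega_step M \<Omega> X d)\<^sup>*\<^sup>* x x'}"

definition C_Omega :: "category \<Rightarrow> space set \<Rightarrow> nat set \<Rightarrow> (nat \<Rightarrow> nat \<Rightarrow> real) \<Rightarrow> nat set set" where
  "C_Omega M \<Omega> X d = X // omega_rel M \<Omega> X d"

definition representable ::
  "category \<Rightarrow> (nat set \<Rightarrow> (nat \<Rightarrow> nat \<Rightarrow> real) \<Rightarrow> nat set set) \<Rightarrow> bool" where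
  "representable M C \<longleftrightarrow>
     (\<exists>\<Omega>. (\<forall>W dW. (W, dW) \<in> \<Omega> \<longrightarrow> fin_metric W dW) \<and>
          (\<forall>X d. fin_metric X d \<longrightarrow> C X d = C_Omega M \<Omega> X d))"

end

theory Submission
  imports Defs
begin

lemma fin_metric_subset: "fin_metric X d \<Longrightarrow> B \<subseteq> X \<Longrightarrow> fin_metric B d"
  unfolding fin_metric_def by (meson finite_subset subsetD)

lemma omega_step_sym: "omega_step M \<Omega> X d a b \<Longrightarrow> omega_step M \<Omega> X d b a"
  unfolding omega_step_def by blast

lemma omega_step_in: "omega_step M \<Omega> X d a b \<Longrightarrow> a \<in> X \<and> b \<in> X"
  unfolding omega_step_def mor_def by blast

lemma rtranclp_sym:
  assumes "\<And>a b. S a b \<Longrightarrow> S b a" "S\<^sup>*\<^sup>* x y"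
  shows "S\<^sup>*\<^sup>* y x"
  using assms(2)
proof (induction rule: rtranclp_induct)
  case base then show ?case by simp
next
  case (step y z)
  then show ?case using assms(1) by (meson converse_rtranclp_into_rtranclp)
qed

lemma chain_block:
  assumes P: "partition_on X P"
    and st: "\<And>a b. S a b \<Longrightarrow> \<exists>q\<in>P. a \<in> q \<and> b \<in> q"
    and r: "S\<^sup>*\<^sup>* x y" and p: "p \<in> P" "x \<in> p"
  shows "y \<in> p"
  using r
proof (induction rule: rtranclp_induct)
  case base then show ?case using p by simp
next
  case (step y z)
  then obtain q where q: "q \<in> P" "y \<in> q" "z \<in> q" using st by blast
  then have "q = p" using P step(3) p unfolding partition_on_def disjoint_def by blast
  then show ?case using q by simp
qed

lemma exc_imp_rep:
  assumes cf: "clustering_functor M C" and ex: "excisive C"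
  shows "representable M C"
proof -
  define \<Omega> :: "space set" where "\<Omega> = {(B, d) | X d B. fin_metric X d \<and> B \<in> C X d}"
  have part: "partition_on X (C X d)" if "fin_metric X d" for X d
    using cf that unfolding clustering_functor_def by blast
  have fm: "\<forall>W dW. (W, dW) \<in> \<Omega> \<longrightarrow> fin_metric W dW"
  proof (intro allI impI)
    fix W dW assume "(W, dW) \<in> \<Omega>"
    then obtain X where X: "fin_metric X dW" "W \<in> C X dW" unfolding \<Omega>_def by blast
    then have "W \<subseteq> X" using part[OF X(1)] unfolding partition_on_def by blast
    then show "fin_metric W dW" using fin_metric_subset X(1) by blast
  qed
  have eq: "C X d = C_Omega M \<Omega> X d" if X: "fin_metric X d" for X d
  proof -
    let ?P = "C X d"
    have P: "partition_on X ?P" using part[OF X] .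
    have st: "\<exists>q\<in>?P. a \<in> q \<and> b \<in> q" if s: "omega_step M \<Omega> X d a b" for a b
    proof -
      obtain W dW \<alpha> \<beta> f where w: "(W, dW) \<in> \<Omega>" "\<alpha> \<in> W" "\<beta> \<in> W" "mor M W dW X d f"
        "f \<alpha> = a" "f \<beta> = b" using s unfolding omega_step_def by blast
      obtain Y where Y: "fin_metric Y dW" "W \<in> C Y dW" using w(1) unfolding \<Omega>_def by blast
      have e: "C W dW = {W}" using ex Y unfolding excisive_def by blast
      have fW: "fin_metric W dW" using fm w(1) by blast
      have "refines (C W dW) (pullback W f ?P)"
        using cf fW X w(4) unfolding clustering_functor_def by blast
      then obtain B where "B \<in> pullback W f ?P" "W \<subseteq> B" using e unfolding refines_def by blast
      then obtain B' where "B' \<in> ?P" "W \<subseteq> f -` B'" unfolding pullback_def by blast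
      then show ?thesis using w by blast
    qed
    have "omega_rel M \<Omega> X d = {(x, y). \<exists>p \<in> ?P. x \<in> p \<and> y \<in> p}"
    proof (intro set_eqI iffI)
      fix xy assume "xy \<in> omega_rel M \<Omega> X d"
      then obtain x y where xy: "xy = (x, y)" "x \<in> X" "y \<in> X" "(omega_step M \<Omega> X d)\<^sup>*\<^sup>* x y"
        unfolding omega_rel_def by blast
      obtain p where p: "p \<in> ?P" "x \<in> p" using P xy(2) unfolding partition_on_def by blast
      have "y \<in> p" using chain_block[OF P st xy(4) p] by blast
      then show "xy \<in> {(x, y). \<exists>p \<in> ?P. x \<in> p \<and> y \<in> p}" using p xy by blast
    next
      fix xy assume "xy \<in> {(x, y). \<exists>p \<in> ?P. x \<in> p \<and> y \<in> p}"
      then obtain x y p where xy: "xy = (x, y)" "p \<in> ?P" "x \<in> p" "y \<in> p" by blast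
      have pX: "p \<subseteq> X" using P xy(2) unfolding partition_on_def by blast
      have "(p, d) \<in> \<Omega>" unfolding \<Omega>_def using X xy(2) by blast
      moreover have "mor M p d X d id" unfolding mor_def using pX by auto
      ultimately have "omega_step M \<Omega> X d x y" unfolding omega_step_def using xy
        by (metis id_apply)
      then show "xy \<in> omega_rel M \<Omega> X d" unfolding omega_rel_def using xy pX by auto
    qed
    then show ?thesis unfolding C_Omega_def using partition_on_eq_quotient[OF P] by simp
  qed
  show ?thesis unfolding representable_def using fm eq by blast
qed

lemma rep_imp_exc:
  assumes rep: "representable M C"
  shows "excisive C"
proof -
  obtain \<Omega> where fm: "\<forall>W dW. (W, dW) \<in> \<Omega> \<longrightarrow> fin_metric W dW"
    and eq: "\<And>X d. fin_metric X d \<Longrightarrow> C X d = C_Omega M \<Omega> X d"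
    using rep unfolding representable_def by blast
  show ?thesis unfolding excisive_def
  proof (intro allI impI ballI)
    fix X d B assume X: "fin_metric X d" and B: "B \<in> C X d"
    let ?S = "omega_step M \<Omega> X d"
    let ?R = "omega_rel M \<Omega> X d"
    have "B \<in> X // ?R" using B eq[OF X] unfolding C_Omega_def by simp
    then obtain x where x: "x \<in> X" "B = ?R `` {x}" by (auto elim: quotientE)
    have Bchar: "b \<in> B \<longleftrightarrow> b \<in> X \<and> ?S\<^sup>*\<^sup>* x b" for b
      using x unfolding omega_rel_def by auto
    have BX: "B \<subseteq> X" using Bchar by blast
    have xB: "x \<in> B" using Bchar x by simp
    have fB: "fin_metric B d" using fin_metric_subset[OF X BX] .
    have lift: "omega_step M \<Omega> B d a b \<and> b \<in> B" if s: "?S a b" and a: "a \<in> B" for a b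
    proof -
      obtain W dW \<alpha> \<beta> f where w: "(W, dW) \<in> \<Omega>" "\<alpha> \<in> W" "\<beta> \<in> W" "mor M W dW X d f"
        "f \<alpha> = a" "f \<beta> = b" using s unfolding omega_step_def by blast
      have img: "f w \<in> B" if "w \<in> W" for w
      proof -
        have "?S a (f w)" unfolding omega_step_def using w that by blast
        moreover have "?S\<^sup>*\<^sup>* x a" using a Bchar by blast
        ultimately have "?S\<^sup>*\<^sup>* x (f w)" by simp
        moreover have "f w \<in> X" using w(4) that unfolding mor_def by blast
        ultimately show ?thesis using Bchar by blast
      qed
      have "mor M W dW B d f" using w(4) img unfolding mor_def by blast
      then show ?thesis unfolding omega_step_def using w img by blast
    qed
    have chain: "(omega_step M \<Omega> B d)\<^sup>*\<^sup>* a b \<and> b \<in> B" if r: "?S\<^sup>*\<^sup>* a b" and a: "a \<in> B" for a b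
      using r
    proof (induction rule: rtranclp_induct)
      case base then show ?case using a by simp
    next
      case (step y z)
      then show ?case using lift by (meson rtranclp.rtrancl_into_rtrancl)
    qed
    have rel: "omega_rel M \<Omega> B d = B \<times> B"
    proof (intro set_eqI iffI)
      fix yz assume "yz \<in> omega_rel M \<Omega> B d"
      then show "yz \<in> B \<times> B" unfolding omega_rel_def by auto
    next
      fix yz assume "yz \<in> B \<times> B"
      then obtain y z where yz: "yz = (y, z)" "y \<in> B" "z \<in> B" by blast
      have "?S\<^sup>*\<^sup>* x y" "?S\<^sup>*\<^sup>* x z" using yz Bchar by blast+
      then have "?S\<^sup>*\<^sup>* y x" using rtranclp_sym[of ?S] omega_step_sym by metis
      then have "?S\<^sup>*\<^sup>* y z" using \<open>?S\<^sup>*\<^sup>* x z\<close> by simp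
      then have "(omega_step M \<Omega> B d)\<^sup>*\<^sup>* y z" using chain yz by blast
      then show "yz \<in> omega_rel M \<Omega> B d" unfolding omega_rel_def using yz by blast
    qed
    have "B // (B \<times> B) = {B}" using xB unfolding quotient_def by auto
    then show "C B d = {B}" using eq[OF fB] rel unfolding C_Omega_def by simp
  qed
qed

theorem mainTheorem3:
  fixes M :: category
    and C :: "nat set \<Rightarrow> (nat \<Rightarrow> nat \<Rightarrow> real) \<Rightarrow> nat set set"
  assumes "clustering_functor M C"
  shows "excisive C \<longleftrightarrow> representable M C"
  using exc_imp_rep[OF assms] rep_imp_exc by blast

end
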